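(* Let $T : M_{m,n}\to M_{r,s}$ be a triple morphism which is not identically zero. Then $T$ is one-to-one, and there exist an integer $k\ge 1$ and unitary matrices $U\in M_r$, $V\in M_s$ such that $$T(A) = U\,\mathrm{diag}\{A, A,\dots, A, 0\}\,V\qquad (A\in M_{m,n}),$$ where $\mathrm{diag}\{A,\dots,A,0\}$ is the block-diagonal $r\times s$ matrix with $k$ copies of $A$ followed by a zero block of size $(r-km)\times(s-kn)$ (possibly empty).
   Context: $M_{m,n}$ denotes the $m\times n$ complex matrices, a triple system with product $xy^*z$. A triple morphism is a linear map $T$ with $T(xy^*z) = T(x)T(y)^*T(z)$. *)

theory Defs
  imports "Jordan_Normal_Form.Schur_Decomposition"
begin

definition triple_prod :: "complex mat \<Rightarrow> complex mat \<Rightarrow> complex mat \<Rightarrow> complex mat" where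
  "triple_prod x y z = x * mat_adjoint y * z"

definition triple_morphism :: "nat \<Rightarrow> nat \<Rightarrow> nat \<Rightarrow> nat \<Rightarrow> (complex mat \<Rightarrow> complex mat) \<Rightarrow> bool" where
  "triple_morphism m n r s T \<longleftrightarrow>
     (\<forall>A \<in> carrier_mat m n. T A \<in> carrier_mat r s) \<and>
     (\<forall>A \<in> carrier_mat m n. \<forall>B \<in> carrier_mat m n. T (A + B) = T A + T B) \<and>
     (\<forall>c. \<forall>A \<in> carrier_mat m n. T (c \<cdot>\<^sub>m A) = c \<cdot>\<^sub>m T A) \<and>
     (\<forall>x \<in> carrier_mat m n. \<forall>y \<in> carrier_mat m n. \<forall>z \<in> carrier_mat m n.
        T (triple_prod x y z) = triple_prod (T x) (T y) (T z))"

definition unitary_mat :: "nat \<Rightarrow> complex mat \<Rightarrow> bool" where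
  "unitary_mat r U \<longleftrightarrow> U \<in> carrier_mat r r \<and> U * mat_adjoint U = 1\<^sub>m r \<and> mat_adjoint U * U = 1\<^sub>m r"

text \<open>r x s block-diagonal matrix diag{A,...,A,0} with k copies of the m x n matrix A,
  followed by a zero block of size (r - k m) x (s - k n).\<close>
definition block_diag_rep :: "nat \<Rightarrow> nat \<Rightarrow> nat \<Rightarrow> nat \<Rightarrow> nat \<Rightarrow> complex mat \<Rightarrow> complex mat" where
  "block_diag_rep k m n r s A = mat r s (\<lambda>(i, j).
     if i < k * m \<and> j < k * n \<and> i div m = j div n then A $$ (i mod m, j mod n) else 0)"

end

theory Submission
  imports Defs
begin

lemma adj_eq: "mat_adjoint A = mat (dim_col A) (dim_row A) (\<lambda>(i,j). cnj (A $$ (j,i)))"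
  unfolding mat_adjoint_def by (rule eq_matI) (auto simp: mat_of_rows_def cols_def)

lemma adj_dims[simp]: "dim_row (mat_adjoint (A::complex mat)) = dim_col A" "dim_col (mat_adjoint A) = dim_row A"
  unfolding adj_eq by simp_all

lemma adj_carrier[simp]: "(A::complex mat) \<in> carrier_mat a b \<Longrightarrow> mat_adjoint A \<in> carrier_mat b a"
  unfolding carrier_mat_def by simp

lemma adj_index[simp]: "i < dim_col A \<Longrightarrow> j < dim_row A \<Longrightarrow> mat_adjoint (A::complex mat) $$ (i,j) = cnj (A $$ (j,i))"
  by (auto simp: adj_eq)

lemma adj_adj[simp]: "mat_adjoint (mat_adjoint (A::complex mat)) = A"
  by (rule eq_matI) auto

lemma adj_mult: assumes "(A::complex mat) \<in> carrier_mat a b" "B \<in> carrier_mat b c"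
  shows "mat_adjoint (A * B) = mat_adjoint B * mat_adjoint A"
  using assms by (intro eq_matI) (auto simp: scalar_prod_def cnj_sum mult.commute)

lemma adj_add: assumes "(A::complex mat) \<in> carrier_mat a b" "B \<in> carrier_mat a b"
  shows "mat_adjoint (A + B) = mat_adjoint A + mat_adjoint B"
  using assms by (intro eq_matI) auto

lemma adj_smult: "mat_adjoint (c \<cdot>\<^sub>m (A::complex mat)) = cnj c \<cdot>\<^sub>m mat_adjoint A"
  by (intro eq_matI) auto

lemma adj_one[simp]: "mat_adjoint (1\<^sub>m n :: complex mat) = 1\<^sub>m n"
  by (intro eq_matI) auto

lemma adj_zero[simp]: "mat_adjoint (0\<^sub>m a b :: complex mat) = 0\<^sub>m b a"
  by (intro eq_matI) auto

definition munit :: "nat \<Rightarrow> nat \<Rightarrow> nat \<Rightarrow> nat \<Rightarrow> complex mat" where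
  "munit m n i j = mat m n (\<lambda>(p,q). if p = i \<and> q = j then 1 else 0)"

lemma munit_carrier[simp]: "munit m n i j \<in> carrier_mat m n"
  by (simp add: munit_def)

lemma munit_dims[simp]: "dim_row (munit m n i j) = m" "dim_col (munit m n i j) = n"
  by (auto simp: munit_def)

lemma munit_index: "p < m \<Longrightarrow> q < n \<Longrightarrow> munit m n i j $$ (p,q) = (if p = i \<and> q = j then 1 else 0)"
  by (simp add: munit_def)

lemma munit_mult_adj: assumes "i < m" "k < m" "j < n" "l < n"
  shows "munit m n i j * mat_adjoint (munit m n k l) = (if j = l then munit m m i k else 0\<^sub>m m m)"
proof (rule eq_matI)
  fix a b assume ab: "a < dim_row (if j = l then munit m m i k else 0\<^sub>m m m)"
     "b < dim_col (if j = l then munit m m i k else 0\<^sub>m m m)"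
  hence a: "a < m" and b: "b < m" by (auto split: if_splits)
  have "(munit m n i j * mat_adjoint (munit m n k l)) $$ (a,b)
     = (\<Sum>y\<in>{0..<n}. (if a = i \<and> y = j then 1 else 0) * cnj (if b = k \<and> y = l then 1 else 0))"
    using a b by (simp add: scalar_prod_def munit_index)
  also have "\<dots> = (\<Sum>y\<in>{0..<n}. if y = j then (if a = i \<and> b = k \<and> j = l then 1 else 0) else 0)"
    by (rule sum.cong) auto
  also have "\<dots> = (if a = i \<and> b = k \<and> j = l then 1 else 0)"
    using assms by simp
  finally show "(munit m n i j * mat_adjoint (munit m n k l)) $$ (a,b) = (if j = l then munit m m i k else 0\<^sub>m m m) $$ (a,b)"
    using a b by (auto simp: munit_index)
qed auto

lemma munit_mult: assumes "i < m" "k < n" "j < n" "l < p"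
  shows "munit m n i j * munit n p k l = (if j = k then munit m p i l else 0\<^sub>m m p)"
proof (rule eq_matI)
  fix a b assume ab: "a < dim_row (if j = k then munit m p i l else 0\<^sub>m m p)"
     "b < dim_col (if j = k then munit m p i l else 0\<^sub>m m p)"
  hence a: "a < m" and b: "b < p" by (auto split: if_splits)
  have "(munit m n i j * munit n p k l) $$ (a,b)
     = (\<Sum>y\<in>{0..<n}. (if a = i \<and> y = j then 1 else 0) * (if y = k \<and> b = l then 1 else 0))"
    using a b by (simp add: scalar_prod_def munit_index)
  also have "\<dots> = (\<Sum>y\<in>{0..<n}. if y = j then (if a = i \<and> b = l \<and> j = k then 1 else 0) else 0)"
    by (rule sum.cong) auto
  also have "\<dots> = (if a = i \<and> b = l \<and> j = k then 1 else 0)"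
    using assms by simp
  finally show "(munit m n i j * munit n p k l) $$ (a,b) = (if j = k then munit m p i l else 0\<^sub>m m p) $$ (a,b)"
    using a b by (auto simp: munit_index)
qed auto

lemma munit_triple: assumes "i < m" "k < m" "p < m" "j < n" "l < n" "q < n"
  shows "triple_prod (munit m n i j) (munit m n k l) (munit m n p q) = (if j = l \<and> k = p then munit m n i q else 0\<^sub>m m n)"
  using assms by (auto simp: triple_prod_def munit_mult_adj munit_mult)



lemma adj_munit: "mat_adjoint (munit m n i j) = munit n m j i"
  by (rule eq_matI) (auto simp: munit_index)

lemma mult_munit_index: assumes "A \<in> carrier_mat x n" "k < n" "a < x" "b < p"
  shows "(A * munit n p k l) $$ (a,b) = (if b = l then A $$ (a,k) else 0)"
proof -
  have "(A * munit n p k l) $$ (a,b) = (\<Sum>y\<in>{0..<n}. A $$ (a,y) * (if y = k \<and> b = l then 1 else 0))"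
    using assms by (simp add: scalar_prod_def munit_index)
  also have "\<dots> = (\<Sum>y\<in>{0..<n}. if y = k then (if b = l then A $$ (a,k) else 0) else 0)"
    by (rule sum.cong) auto
  also have "\<dots> = (if b = l then A $$ (a,k) else 0)" using assms by simp
  finally show ?thesis .
qed

lemma munit_mult_index: assumes "B \<in> carrier_mat n x" "j < n" "a < m" "b < x"
  shows "(munit m n i j * B) $$ (a,b) = (if a = i then B $$ (j,b) else 0)"
proof -
  have "(munit m n i j * B) $$ (a,b) = (\<Sum>y\<in>{0..<n}. (if a = i \<and> y = j then 1 else 0) * B $$ (y,b))"
    using assms by (simp add: scalar_prod_def munit_index)
  also have "\<dots> = (\<Sum>y\<in>{0..<n}. if y = j then (if a = i then B $$ (j,b) else 0) else 0)"
    by (rule sum.cong) auto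
  also have "\<dots> = (if a = i then B $$ (j,b) else 0)" using assms by simp
  finally show ?thesis .
qed

lemma lin_ind:
  fixes P :: "complex mat \<Rightarrow> bool"
  assumes z: "P (0\<^sub>m m n)"
   and add: "\<And>A B. A \<in> carrier_mat m n \<Longrightarrow> B \<in> carrier_mat m n \<Longrightarrow> P A \<Longrightarrow> P B \<Longrightarrow> P (A + B)"
   and sm: "\<And>c A. A \<in> carrier_mat m n \<Longrightarrow> P A \<Longrightarrow> P (c \<cdot>\<^sub>m A)"
   and u: "\<And>i j. i < m \<Longrightarrow> j < n \<Longrightarrow> P (munit m n i j)"
   and A: "A \<in> carrier_mat m n"
  shows "P A"
proof -
  have main: "\<forall>A\<in>carrier_mat m n. (\<forall>i<m. \<forall>j<n. N \<le> i*n+j \<longrightarrow> A$$(i,j) = 0) \<longrightarrow> P A" for N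
  proof (induction N)
    case 0
    show ?case
    proof (intro ballI impI)
      fix A :: "complex mat" assume A: "A \<in> carrier_mat m n" and "\<forall>i<m. \<forall>j<n. 0 \<le> i*n+j \<longrightarrow> A$$(i,j) = 0"
      hence "A = 0\<^sub>m m n" by (intro eq_matI) auto
      thus "P A" using z by simp
    qed
  next
    case (Suc N)
    show ?case
    proof (intro ballI impI)
      fix A :: "complex mat" assume A: "A \<in> carrier_mat m n" and supp: "\<forall>i<m. \<forall>j<n. Suc N \<le> i*n+j \<longrightarrow> A$$(i,j) = 0"
      show "P A"
      proof (cases "N < m * n")
        case True
        define i0 where "i0 = N div n"
        define j0 where "j0 = N mod n"
        have npos: "n > 0" using True by (cases n) auto
        have i0: "i0 < m" unfolding i0_def using True by (simp add: less_mult_imp_div_less)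
        have j0: "j0 < n" unfolding j0_def using npos by simp
        have N: "N = i0 * n + j0" unfolding i0_def j0_def by simp
        define B where "B = mat m n (\<lambda>(i,j). if i = i0 \<and> j = j0 then 0 else A$$(i,j))"
        have B: "B \<in> carrier_mat m n" unfolding B_def by simp
        have uniq: "i * n + j = i0 * n + j0 \<Longrightarrow> j < n \<Longrightarrow> i = i0 \<and> j = j0" for i j
        proof -
          assume eq: "i * n + j = i0 * n + j0" and jn: "j < n"
          have "j = (i * n + j) mod n" using jn by simp
          also have "\<dots> = j0" using eq j0 by simp
          finally have jj: "j = j0" .
          hence "i * n = i0 * n" using eq by simp
          thus ?thesis using jj npos by simp
        qed
        have "\<forall>i<m. \<forall>j<n. N \<le> i*n+j \<longrightarrow> B$$(i,j) = 0"
        proof (intro allI impI)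
          fix i j assume ij: "i < m" "j < n" "N \<le> i*n+j"
          show "B$$(i,j) = 0"
          proof (cases "i*n+j = N")
            case True thus ?thesis using uniq[of i j] ij N unfolding B_def by auto
          next
            case False thus ?thesis using supp ij unfolding B_def by auto
          qed
        qed
        hence PB: "P B" using Suc.IH B by blast
        have PU: "P (A$$(i0,j0) \<cdot>\<^sub>m munit m n i0 j0)" by (rule sm) (auto intro: u i0 j0)
        have "A = B + A$$(i0,j0) \<cdot>\<^sub>m munit m n i0 j0"
          using A by (intro eq_matI) (auto simp: B_def munit_index)
        thus "P A" using add[OF B _ PB PU] by simp
      next
        case False
        have "\<forall>i<m. \<forall>j<n. N \<le> i*n+j \<longrightarrow> A$$(i,j) = 0"
        proof (intro allI impI)
          fix i j assume ij: "i < m" "j < n" "N \<le> i*n+j"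
          have "i*n+j < i*n + n" using ij by simp
          also have "\<dots> = (i+1)*n" by simp
          also have "\<dots> \<le> m*n" using ij by (intro mult_right_mono) auto
          finally show "A$$(i,j) = 0" using False ij by simp
        qed
        thus "P A" using Suc.IH A by blast
      qed
    qed
  qed
  have "\<forall>i<m. \<forall>j<n. m*n \<le> i*n+j \<longrightarrow> A$$(i,j) = 0"
  proof (intro allI impI)
    fix i j assume ij: "i < m" "j < n" "m*n \<le> i*n+j"
    have "i*n+j < i*n + n" using ij by simp
    also have "\<dots> = (i+1)*n" by simp
    also have "\<dots> \<le> m*n" using ij by (intro mult_right_mono) auto
    finally show "A$$(i,j) = 0" using ij by simp
  qed
  thus ?thesis using main A by blast
qed

locale tm =
  fixes m n r s :: nat and T :: "complex mat \<Rightarrow> complex mat"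
  assumes tm: "triple_morphism m n r s T"
begin

lemma T_carrier[simp]: "A \<in> carrier_mat m n \<Longrightarrow> T A \<in> carrier_mat r s"
  using tm unfolding triple_morphism_def by blast

lemma T_add: "A \<in> carrier_mat m n \<Longrightarrow> B \<in> carrier_mat m n \<Longrightarrow> T (A + B) = T A + T B"
  using tm unfolding triple_morphism_def by blast

lemma T_smult: "A \<in> carrier_mat m n \<Longrightarrow> T (c \<cdot>\<^sub>m A) = c \<cdot>\<^sub>m T A"
  using tm unfolding triple_morphism_def by blast

lemma T_triple: "x \<in> carrier_mat m n \<Longrightarrow> y \<in> carrier_mat m n \<Longrightarrow> z \<in> carrier_mat m n \<Longrightarrow>
   T (x * mat_adjoint y * z) = T x * mat_adjoint (T y) * T z"
  using tm unfolding triple_morphism_def triple_prod_def by blast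

lemma T_zero: "T (0\<^sub>m m n) = 0\<^sub>m r s"
proof -
  have "T (0 \<cdot>\<^sub>m 0\<^sub>m m n) = 0 \<cdot>\<^sub>m T (0\<^sub>m m n)" by (rule T_smult) simp
  moreover have "0 \<cdot>\<^sub>m 0\<^sub>m m n = (0\<^sub>m m n :: complex mat)" by (intro eq_matI) auto
  moreover have "0 \<cdot>\<^sub>m T (0\<^sub>m m n) = 0\<^sub>m r s"
    using carrier_matD[OF T_carrier[of "0\<^sub>m m n"]] by (intro eq_matI) auto
  ultimately show ?thesis by simp
qed

definition e :: "nat \<Rightarrow> nat \<Rightarrow> complex mat" where "e i j = T (munit m n i j)"

lemma e_carrier[simp]: "e i j \<in> carrier_mat r s"
  unfolding e_def by simp

lemma e_rel: assumes "i < m" "k < m" "p < m" "j < n" "l < n" "q < n"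
  shows "e i j * mat_adjoint (e k l) * e p q = (if j = l \<and> k = p then e i q else 0\<^sub>m r s)"
proof -
  have "e i j * mat_adjoint (e k l) * e p q = T (triple_prod (munit m n i j) (munit m n k l) (munit m n p q))"
    unfolding e_def triple_prod_def by (rule T_triple[symmetric]) auto
  also have "\<dots> = (if j = l \<and> k = p then e i q else 0\<^sub>m r s)"
    using assms by (simp add: munit_triple e_def T_zero)
  finally show ?thesis .
qed

lemma five: assumes A: "A \<in> carrier_mat m n" and i: "i < m" and j: "j < n" and m0: "0 < m" and n0: "0 < n"
  shows "e 0 0 * mat_adjoint (e i 0) * T A * mat_adjoint (e 0 j) * e 0 0 = A $$ (i,j) \<cdot>\<^sub>m e 0 0"
proof -
  let ?E = "munit m n"
  have "e 0 0 * mat_adjoint (e i 0) * T A * mat_adjoint (e 0 j) * e 0 0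
      = T (?E 0 0 * mat_adjoint (?E i 0) * A) * mat_adjoint (e 0 j) * e 0 0"
    unfolding e_def using A by (subst T_triple) auto
  also have "\<dots> = T (?E 0 0 * mat_adjoint (?E i 0) * A * mat_adjoint (?E 0 j) * ?E 0 0)"
    unfolding e_def using A by (subst T_triple) auto
  also have "?E 0 0 * mat_adjoint (?E i 0) * A * mat_adjoint (?E 0 j) * ?E 0 0 = A $$ (i,j) \<cdot>\<^sub>m ?E 0 0"
  proof -
    have X1: "?E 0 0 * mat_adjoint (?E i 0) = munit m m 0 i"
      using i m0 n0 by (simp add: adj_munit munit_mult)
    define X2 where "X2 = munit m m 0 i * A"
    have X2c: "X2 \<in> carrier_mat m n" unfolding X2_def using mult_carrier_mat[OF munit_carrier A] .
    have X2i: "X2 $$ (a,b) = (if a = 0 then A $$ (i,b) else 0)" if "a < m" "b < n" for a b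
      using that unfolding X2_def by (intro munit_mult_index[OF A i])
    define X3 where "X3 = X2 * munit n m j 0"
    have X3c: "X3 \<in> carrier_mat m m" unfolding X3_def using mult_carrier_mat[OF X2c munit_carrier] .
    have X3i: "X3 $$ (a,b) = (if a = 0 \<and> b = 0 then A $$ (i,j) else 0)" if "a < m" "b < m" for a b
      unfolding X3_def by (subst mult_munit_index[OF X2c j]) (use that m0 j in \<open>auto simp: X2i\<close>)
    have "X3 * ?E 0 0 = A $$ (i,j) \<cdot>\<^sub>m ?E 0 0"
    proof (rule eq_matI)
      fix a b assume "a < dim_row (A $$ (i,j) \<cdot>\<^sub>m ?E 0 0)" "b < dim_col (A $$ (i,j) \<cdot>\<^sub>m ?E 0 0)"
      hence ab: "a < m" "b < n" by auto
      show "(X3 * ?E 0 0) $$ (a,b) = (A $$ (i,j) \<cdot>\<^sub>m ?E 0 0) $$ (a,b)"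
        by (subst mult_munit_index[OF X3c m0]) (use ab m0 in \<open>auto simp: X3i munit_index\<close>)
    qed (use X3c in auto)
    thus ?thesis using X1 by (simp add: X2_def X3_def adj_munit)
  qed
  finally show ?thesis using T_smult by (simp add: e_def)
qed

end



lemma mat_vec_zero[simp]: "(A :: complex mat) \<in> carrier_mat nr nc \<Longrightarrow> A *\<^sub>v 0\<^sub>v nc = 0\<^sub>v nr"
  by (intro eq_vecI) (auto simp: scalar_prod_def)

lemma kernel_exists:
  assumes A: "(A :: complex mat) \<in> carrier_mat p q" and pq: "p < q"
  shows "\<exists>v\<in>carrier_vec q. v \<noteq> 0\<^sub>v q \<and> A *\<^sub>v v = 0\<^sub>v p"
proof -
  define A' where "A' = mat q q (\<lambda>(i,j). if i < p then A$$(i,j) else 0)"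
  have A'c: "A' \<in> carrier_mat q q" unfolding A'_def by simp
  have q0: "q - 1 < q" using pq by simp
  have "A' = mat\<^sub>r q q (\<lambda>i. if i = q - 1 then 0\<^sub>v q else row A' i)"
    by (rule eq_matI) (use pq in \<open>auto simp: A'_def\<close>)
  hence "det A' = 0"
    using det_row_0[OF q0, of "\<lambda>i. row A' i"] A'c by (auto simp: Pi_def)
  then obtain v where v: "v \<in> carrier_vec q" "v \<noteq> 0\<^sub>v q" "A' *\<^sub>v v = 0\<^sub>v q"
    using det_0_iff_vec_prod_zero[OF A'c] by blast
  have "A *\<^sub>v v = 0\<^sub>v p"
  proof (rule eq_vecI)
    fix i assume "i < dim_vec (0\<^sub>v p :: complex vec)"
    hence i: "i < p" by simp
    have "row A i = row A' i"
      using A i pq by (intro eq_vecI) (auto simp: A'_def)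
    hence "(A *\<^sub>v v) $ i = (A' *\<^sub>v v) $ i"
      using A A'c i pq by simp
    thus "(A *\<^sub>v v) $ i = 0\<^sub>v p $ i" using v i pq by simp
  qed (use A in simp)
  thus ?thesis using v by blast
qed

lemma adj_mult_index: assumes "G \<in> carrier_mat r K" "H \<in> carrier_mat r L" "p < K" "q < L"
  shows "(mat_adjoint G * H) $$ (p,q) = (\<Sum>t<r. cnj (G$$(t,p)) * H$$(t,q))"
  using assms by (simp add: scalar_prod_def atLeast0LessThan)

lemma adj_mult_vec_index: assumes "G \<in> carrier_mat r K" "y \<in> carrier_vec r" "p < K"
  shows "(mat_adjoint G *\<^sub>v y) $ p = (\<Sum>t<r. cnj (G$$(t,p)) * y$t)"
  using assms by (simp add: scalar_prod_def atLeast0LessThan)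

lemma isometry_bound:
  assumes F: "(F :: complex mat) \<in> carrier_mat r N" and iso: "mat_adjoint F * F = 1\<^sub>m N"
  shows "N \<le> r"
proof (rule ccontr)
  assume "\<not> N \<le> r"
  then obtain v where v: "v \<in> carrier_vec N" "v \<noteq> 0\<^sub>v N" "F *\<^sub>v v = 0\<^sub>v r"
    using kernel_exists[OF F] by auto
  have "v = (mat_adjoint F * F) *\<^sub>v v" using iso v by simp
  also have "\<dots> = mat_adjoint F *\<^sub>v (F *\<^sub>v v)" using F v by (simp add: assoc_mult_mat_vec[of _ N r])
  also have "\<dots> = 0\<^sub>v N" using v F by simp
  finally show False using v by simp
qed

lemma extend:
  assumes M: "(M :: complex mat) \<in> carrier_mat r r" and F: "F \<in> carrier_mat r N"
    and iso: "mat_adjoint F * F = 1\<^sub>m N" and MF: "M * F = F"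
  shows "\<exists>N' F'. N \<le> N' \<and> F' \<in> carrier_mat r N' \<and> mat_adjoint F' * F' = 1\<^sub>m N' \<and> M * F' = F'
     \<and> (\<forall>t<r. \<forall>p<N. F' $$ (t,p) = F $$ (t,p))
     \<and> (\<forall>x\<in>carrier_vec r. M *\<^sub>v x = x \<longrightarrow> F' *\<^sub>v (mat_adjoint F' *\<^sub>v x) = x)"
  using F iso MF
proof (induction "r - N" arbitrary: N F rule: less_induct)
  case less
  note F = less.prems(1) and iso = less.prems(2) and MF = less.prems(3)
  show ?case
  proof (cases "\<forall>x\<in>carrier_vec r. M *\<^sub>v x = x \<longrightarrow> F *\<^sub>v (mat_adjoint F *\<^sub>v x) = x")
    case True
    thus ?thesis using F iso MF by blast
  next
    case False
    then obtain x where x: "x \<in> carrier_vec r" "M *\<^sub>v x = x" and nx: "F *\<^sub>v (mat_adjoint F *\<^sub>v x) \<noteq> x"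
      by blast
    define w where "w = mat_adjoint F *\<^sub>v x"
    have w: "w \<in> carrier_vec N" unfolding w_def using mult_mat_vec_carrier[OF adj_carrier[OF F] x(1)] .
    have Fw: "F *\<^sub>v w \<in> carrier_vec r" using F w by simp
    define y where "y = x - F *\<^sub>v w"
    have y: "y \<in> carrier_vec r" unfolding y_def using x Fw by simp
    have Fy: "mat_adjoint F *\<^sub>v y = 0\<^sub>v N"
    proof -
      have "mat_adjoint F *\<^sub>v y = mat_adjoint F *\<^sub>v x - mat_adjoint F *\<^sub>v (F *\<^sub>v w)"
        unfolding y_def using F x Fw by (simp add: mult_minus_distrib_mat_vec[of _ N r])
      also have "mat_adjoint F *\<^sub>v (F *\<^sub>v w) = (mat_adjoint F * F) *\<^sub>v w"
        using F w by (simp add: assoc_mult_mat_vec[of _ N r])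
      also have "\<dots> = w" using iso w by simp
      finally show ?thesis unfolding w_def using w[unfolded w_def] by simp
    qed
    have My: "M *\<^sub>v y = y"
    proof -
      have "M *\<^sub>v y = M *\<^sub>v x - M *\<^sub>v (F *\<^sub>v w)"
        unfolding y_def using M x Fw by (simp add: mult_minus_distrib_mat_vec[of _ r r])
      also have "M *\<^sub>v (F *\<^sub>v w) = (M * F) *\<^sub>v w"
        using M F w by (simp add: assoc_mult_mat_vec[of _ r r])
      finally show ?thesis using x MF unfolding y_def by simp
    qed
    have yne: "y \<noteq> 0\<^sub>v r"
    proof
      assume "y = 0\<^sub>v r"
      hence y0: "\<And>i. i < r \<Longrightarrow> (x - F *\<^sub>v w) $ i = 0" unfolding y_def by simp
      have "x = F *\<^sub>v w"
      proof (rule eq_vecI)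
        fix i assume "i < dim_vec (F *\<^sub>v w)"
        hence i: "i < r" using F by simp
        show "x $ i = (F *\<^sub>v w) $ i" using y0[OF i] i carrier_vecD[OF Fw] by simp
      qed (use x F in simp)
      thus False using nx unfolding w_def by simp
    qed
    then obtain t0 where t0: "t0 < r" "y $ t0 \<noteq> 0" using y by (metis eq_vecI carrier_vecD index_zero_vec)
    define nrm where "nrm = (\<Sum>t<r. (cmod (y$t))^2)"
    have nrm_pos: "nrm > 0"
    proof -
      have "(cmod (y$t0))^2 \<le> nrm" unfolding nrm_def
        by (rule member_le_sum) (use t0 in auto)
      moreover have "(cmod (y$t0))^2 > 0" using t0 by simp
      ultimately show ?thesis by linarith
    qed
    define c where "c = complex_of_real (1 / sqrt nrm)"
    define z where "z = c \<cdot>\<^sub>v y"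
    have z: "z \<in> carrier_vec r" unfolding z_def using y by simp
    have zi: "t < r \<Longrightarrow> z $ t = c * y $ t" for t unfolding z_def using y by simp
    define F2 where "F2 = mat r (Suc N) (\<lambda>(t,p). if p < N then F$$(t,p) else z$t)"
    have F2c: "F2 \<in> carrier_mat r (Suc N)" unfolding F2_def by simp
    have F2i: "t < r \<Longrightarrow> p < Suc N \<Longrightarrow> F2 $$ (t,p) = (if p < N then F$$(t,p) else z$t)" for t p
      unfolding F2_def by simp
    have orth: "(\<Sum>t<r. cnj (F$$(t,p)) * z$t) = 0" if p: "p < N" for p
    proof -
      have "(\<Sum>t<r. cnj (F$$(t,p)) * z$t) = c * (\<Sum>t<r. cnj (F$$(t,p)) * y$t)"
        by (simp add: zi sum_distrib_left ac_simps)
      also have "(\<Sum>t<r. cnj (F$$(t,p)) * y$t) = (mat_adjoint F *\<^sub>v y) $ p"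
        using adj_mult_vec_index[OF F y p] by simp
      also have "\<dots> = 0" using Fy p by simp
      finally show ?thesis by simp
    qed
    have zz: "(\<Sum>t<r. cnj (z$t) * z$t) = 1"
    proof -
      have "(\<Sum>t<r. cnj (z$t) * z$t) = (\<Sum>t<r. complex_of_real ((1 / sqrt nrm)^2 * (cmod (y$t))^2))"
      proof (rule sum.cong)
        fix t assume "t \<in> {..<r}"
        hence "z$t = c * y$t" by (simp add: zi)
        hence "cnj (z$t) * z$t = (cnj c * c) * (cnj (y$t) * y$t)" by (simp add: ac_simps)
        also have "cnj c * c = complex_of_real ((1 / sqrt nrm)^2)"
        proof -
          have sq: "complex_of_real (sqrt nrm) * complex_of_real (sqrt nrm) = complex_of_real nrm"
            using nrm_pos by (simp flip: of_real_mult)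
          show ?thesis unfolding c_def using nrm_pos sq by (simp add: power2_eq_square)
        qed
        also have "cnj (y$t) * y$t = complex_of_real ((cmod (y$t))^2)" using complex_norm_square[of "y$t"] by (simp add: mult.commute)
        finally show "cnj (z$t) * z$t = complex_of_real ((1 / sqrt nrm)^2 * (cmod (y$t))^2)"
          by simp
      qed simp
      also have "\<dots> = complex_of_real ((1 / sqrt nrm)^2 * nrm)"
        unfolding nrm_def by (simp add: sum_distrib_left)
      also have "\<dots> = 1" using nrm_pos by (simp add: power_divide)
      finally show ?thesis .
    qed
    have iso2: "mat_adjoint F2 * F2 = 1\<^sub>m (Suc N)"
    proof (rule eq_matI)
      fix p q assume "p < dim_row (1\<^sub>m (Suc N) :: complex mat)" "q < dim_col (1\<^sub>m (Suc N) :: complex mat)"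
      hence p: "p < Suc N" and q: "q < Suc N" by auto
      have "(mat_adjoint F2 * F2) $$ (p,q) = (\<Sum>t<r. cnj (F2$$(t,p)) * F2$$(t,q))"
        by (rule adj_mult_index[OF F2c F2c p q])
      also have "\<dots> = 1\<^sub>m (Suc N) $$ (p,q)"
      proof (cases "p < N")
        case pN: True
        show ?thesis
        proof (cases "q < N")
          case True
          have "(\<Sum>t<r. cnj (F2$$(t,p)) * F2$$(t,q)) = (\<Sum>t<r. cnj (F$$(t,p)) * F$$(t,q))"
            by (rule sum.cong) (use pN True in \<open>auto simp: F2i\<close>)
          also have "\<dots> = (mat_adjoint F * F) $$ (p,q)" by (rule adj_mult_index[OF F F pN True, symmetric])
          finally show ?thesis using iso pN True p q by simp
        next
          case False
          hence qN: "q = N" using q by simp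
          have "(\<Sum>t<r. cnj (F2$$(t,p)) * F2$$(t,q)) = (\<Sum>t<r. cnj (F$$(t,p)) * z$t)"
            by (rule sum.cong) (use pN qN in \<open>auto simp: F2i\<close>)
          thus ?thesis using orth[OF pN] pN qN by simp
        qed
      next
        case False
        hence pN: "p = N" using p by simp
        show ?thesis
        proof (cases "q < N")
          case True
          have "(\<Sum>t<r. cnj (F2$$(t,p)) * F2$$(t,q)) = cnj (\<Sum>t<r. cnj (F$$(t,q)) * z$t)"
            unfolding cnj_sum by (rule sum.cong) (use pN True in \<open>auto simp: F2i mult.commute\<close>)
          thus ?thesis using orth[OF True] pN True by simp
        next
          case False
          hence qN: "q = N" using q by simp
          have "(\<Sum>t<r. cnj (F2$$(t,p)) * F2$$(t,q)) = (\<Sum>t<r. cnj (z$t) * z$t)"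
            by (rule sum.cong) (use pN qN in \<open>auto simp: F2i\<close>)
          thus ?thesis using zz pN qN by simp
        qed
      qed
      finally show "(mat_adjoint F2 * F2) $$ (p,q) = 1\<^sub>m (Suc N) $$ (p,q)" .
    qed (use F2c in auto)
    have MF2: "M * F2 = F2"
    proof (rule eq_matI)
      fix t p assume "t < dim_row F2" "p < dim_col F2"
      hence t: "t < r" and p: "p < Suc N" using F2c by auto
      show "(M * F2) $$ (t,p) = F2 $$ (t,p)"
      proof (cases "p < N")
        case True
        have "col F2 p = col F p" using F F2c True by (intro eq_vecI) (auto simp: F2i)
        hence "(M * F2) $$ (t,p) = (M * F) $$ (t,p)" using M F F2c t p True by simp
        thus ?thesis using MF t True by (simp add: F2i)
      next
        case False
        hence pN: "p = N" using p by simp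
        have "col F2 p = z" using F2c z pN by (intro eq_vecI) (auto simp: F2i)
        hence "(M * F2) $$ (t,p) = (M *\<^sub>v z) $ t" using M F2c t p by simp
        also have "M *\<^sub>v z = c \<cdot>\<^sub>v (M *\<^sub>v y)" unfolding z_def by (rule mult_mat_vec[OF M y])
        also have "\<dots> = z" using My z_def by simp
        finally show ?thesis using t pN by (simp add: F2i)
      qed
    qed (use M F2c in auto)
    have "Suc N \<le> r" by (rule isometry_bound[OF F2c iso2])
    hence lt: "r - Suc N < r - N" by simp
    obtain N' F' where res: "Suc N \<le> N'" "F' \<in> carrier_mat r N'" "mat_adjoint F' * F' = 1\<^sub>m N'" "M * F' = F'"
       "\<forall>t<r. \<forall>p<Suc N. F' $$ (t,p) = F2 $$ (t,p)"
       "\<forall>x\<in>carrier_vec r. M *\<^sub>v x = x \<longrightarrow> F' *\<^sub>v (mat_adjoint F' *\<^sub>v x) = x"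
      using less.hyps[OF lt F2c iso2 MF2] by blast
    have "\<forall>t<r. \<forall>p<N. F' $$ (t,p) = F $$ (t,p)" using res(5) by (simp add: F2i)
    thus ?thesis using res by (intro exI[of _ N'] exI[of _ F']) auto
  qed
qed



lemma mat_unit_index: assumes "(A :: complex mat) \<in> carrier_mat a b" "i < a" "j < b"
  shows "(A *\<^sub>v unit_vec b j) $ i = A $$ (i,j)"
  using assms by simp

lemma complete_unitary:
  assumes F: "(F :: complex mat) \<in> carrier_mat r N" and iso: "mat_adjoint F * F = 1\<^sub>m N"
  shows "\<exists>U. U \<in> carrier_mat r r \<and> mat_adjoint U * U = 1\<^sub>m r \<and> U * mat_adjoint U = 1\<^sub>m r
     \<and> (\<forall>t<r. \<forall>p<N. U $$ (t,p) = F $$ (t,p))"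
proof -
  have M: "1\<^sub>m r \<in> carrier_mat r r" by simp
  have MF: "1\<^sub>m r * F = F" using F by simp
  obtain N' F' where res: "N \<le> N'" "F' \<in> carrier_mat r N'" "mat_adjoint F' * F' = 1\<^sub>m N'"
    "\<forall>t<r. \<forall>p<N. F' $$ (t,p) = F $$ (t,p)"
    "\<forall>x\<in>carrier_vec r. 1\<^sub>m r *\<^sub>v x = x \<longrightarrow> F' *\<^sub>v (mat_adjoint F' *\<^sub>v x) = x"
    using extend[OF M F iso MF] by blast
  have comp: "F' *\<^sub>v (mat_adjoint F' *\<^sub>v x) = x" if "x \<in> carrier_vec r" for x
    using res(5) that by simp
  have "N' \<le> r" by (rule isometry_bound[OF res(2) res(3)])
  moreover have "\<not> N' < r"
  proof
    assume "N' < r"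
    then obtain v where v: "v \<in> carrier_vec r" "v \<noteq> 0\<^sub>v r" "mat_adjoint F' *\<^sub>v v = 0\<^sub>v N'"
      using kernel_exists[OF adj_carrier[OF res(2)]] by blast
    have "v = F' *\<^sub>v 0\<^sub>v N'" using comp[OF v(1)] v(3) by simp
    also have "\<dots> = 0\<^sub>v r" using res(2) by simp
    finally show False using v by simp
  qed
  ultimately have N': "N' = r" by simp
  have U: "F' \<in> carrier_mat r r" using res(2) N' by simp
  have "F' * mat_adjoint F' = 1\<^sub>m r"
  proof (rule eq_matI)
    fix i j assume "i < dim_row (1\<^sub>m r :: complex mat)" "j < dim_col (1\<^sub>m r :: complex mat)"
    hence i: "i < r" and j: "j < r" by auto
    have P: "F' * mat_adjoint F' \<in> carrier_mat r r" using U by simp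
    have "(F' * mat_adjoint F') $$ (i,j) = ((F' * mat_adjoint F') *\<^sub>v unit_vec r j) $ i"
      using mat_unit_index[OF P i j] by simp
    also have "(F' * mat_adjoint F') *\<^sub>v unit_vec r j = F' *\<^sub>v (mat_adjoint F' *\<^sub>v unit_vec r j)"
      by (rule assoc_mult_mat_vec[OF U adj_carrier[OF U] unit_vec_carrier])
    also have "\<dots> = unit_vec r j" using comp by simp
    finally show "(F' * mat_adjoint F') $$ (i,j) = 1\<^sub>m r $$ (i,j)" using i j by simp
  qed (use U in auto)
  thus ?thesis using U res(3) res(4) N' by blast
qed

lemma range_basis:
  assumes a: "(a :: complex mat) \<in> carrier_mat r s" and pa: "a * mat_adjoint a * a = a"
  shows "\<exists>k Uk. Uk \<in> carrier_mat r k \<and> mat_adjoint Uk * Uk = 1\<^sub>m k \<and> a * mat_adjoint a * Uk = Uk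
     \<and> Uk * mat_adjoint Uk * a = a"
proof -
  define M where "M = a * mat_adjoint a"
  have M: "M \<in> carrier_mat r r" unfolding M_def using a by simp
  have F: "0\<^sub>m r 0 \<in> carrier_mat r 0" by simp
  have iso: "mat_adjoint (0\<^sub>m r 0) * 0\<^sub>m r 0 = (1\<^sub>m 0 :: complex mat)" by (rule eq_matI) auto
  have MF: "M * 0\<^sub>m r 0 = 0\<^sub>m r 0" using M by (intro eq_matI) auto
  obtain k Uk where res: "Uk \<in> carrier_mat r k" "mat_adjoint Uk * Uk = 1\<^sub>m k" "M * Uk = Uk"
    "\<forall>x\<in>carrier_vec r. M *\<^sub>v x = x \<longrightarrow> Uk *\<^sub>v (mat_adjoint Uk *\<^sub>v x) = x"
    using extend[OF M F iso MF] by blast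
  have "Uk * mat_adjoint Uk * a = a"
  proof (rule eq_matI)
    fix t j assume "t < dim_row a" "j < dim_col a"
    hence t: "t < r" and j: "j < s" using a by auto
    have cj: "col a j \<in> carrier_vec r" unfolding carrier_vec_def using a by auto
    have "M *\<^sub>v col a j = col (M * a) j" by (rule col_mult2[OF M a j, symmetric])
    also have "M * a = a" unfolding M_def using pa .
    finally have Mc: "M *\<^sub>v col a j = col a j" .
    have P: "Uk * mat_adjoint Uk \<in> carrier_mat r r" using res(1) by simp
    have e1: "(Uk * mat_adjoint Uk * a) $$ (t,j) = ((Uk * mat_adjoint Uk) *\<^sub>v col a j) $ t"
      using carrier_matD[OF P] carrier_matD[OF a] t j by simp
    have "(Uk * mat_adjoint Uk) *\<^sub>v col a j = Uk *\<^sub>v (mat_adjoint Uk *\<^sub>v col a j)"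
      by (rule assoc_mult_mat_vec[OF res(1) adj_carrier[OF res(1)] cj])
    also have "\<dots> = col a j" using res(4) cj Mc by blast
    finally show "(Uk * mat_adjoint Uk * a) $$ (t,j) = a $$ (t,j)" using e1 a t j by simp
  qed (use a res(1) in auto)
  thus ?thesis using res M_def by blast
qed



lemma divmod_eq_iff: assumes "i < (c::nat)" shows "(p mod c = i \<and> p div c = l) \<longleftrightarrow> p = l * c + i"
proof
  assume "p mod c = i \<and> p div c = l"
  thus "p = l * c + i" by (metis div_mult_mod_eq add.commute)
next
  assume "p = l * c + i"
  thus "p mod c = i \<and> p div c = l" using assms by simp
qed

lemma big_props:
  fixes H :: "nat \<Rightarrow> complex mat"
  assumes Hc: "\<And>x. x < c \<Longrightarrow> H x \<in> carrier_mat R k"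
    and orth: "\<And>x y. x < c \<Longrightarrow> y < c \<Longrightarrow> mat_adjoint (H x) * H y = (if x = y then 1\<^sub>m k else 0\<^sub>m k k)"
    and Big: "Big = mat R (k*c) (\<lambda>(t,p). H (p mod c) $$ (t, p div c))"
  shows "Big \<in> carrier_mat R (k*c)"
    and "mat_adjoint Big * Big = 1\<^sub>m (k*c)"
    and "\<And>i. i < c \<Longrightarrow> Big * (mat_adjoint Big * H i) = H i"
    and "\<And>t l i. t < R \<Longrightarrow> l < k \<Longrightarrow> i < c \<Longrightarrow> Big $$ (t, l*c+i) = H i $$ (t,l)"
proof -
  show Bc: "Big \<in> carrier_mat R (k*c)" unfolding Big by simp
  have pbounds: "p mod c < c \<and> p div c < k" if "p < k*c" for p
  proof -
    have "c > 0" using that by (cases c) auto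
    thus ?thesis using that by (simp add: less_mult_imp_div_less mult.commute)
  qed
  have Bi: "Big $$ (t,p) = H (p mod c) $$ (t, p div c)" if "t < R" "p < k*c" for t p
    unfolding Big using that by simp
  show Bi2: "Big $$ (t, l*c+i) = H i $$ (t,l)" if "t < R" "l < k" "i < c" for t l i
  proof -
    have "l*c+i < k*c"
    proof -
      have "l*c+i < l*c + c" using that by simp
      also have "\<dots> = (l+1)*c" by simp
      also have "\<dots> \<le> k*c" using that by (intro mult_right_mono) auto
      finally show ?thesis .
    qed
    thus ?thesis using Bi[of t "l*c+i"] that by simp
  qed
  show "mat_adjoint Big * Big = 1\<^sub>m (k*c)"
  proof (rule eq_matI)
    fix p q assume "p < dim_row (1\<^sub>m (k*c) :: complex mat)" "q < dim_col (1\<^sub>m (k*c) :: complex mat)"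
    hence p: "p < k*c" and q: "q < k*c" by auto
    note pb = pbounds[OF p] and qb = pbounds[OF q]
    have "(mat_adjoint Big * Big) $$ (p,q) = (\<Sum>t<R. cnj (Big$$(t,p)) * Big$$(t,q))"
      by (rule adj_mult_index[OF Bc Bc p q])
    also have "\<dots> = (\<Sum>t<R. cnj (H (p mod c) $$ (t, p div c)) * H (q mod c) $$ (t, q div c))"
      by (rule sum.cong) (use p q in \<open>auto simp: Bi\<close>)
    also have "\<dots> = (mat_adjoint (H (p mod c)) * H (q mod c)) $$ (p div c, q div c)"
      by (rule adj_mult_index[symmetric]) (use pb qb Hc in auto)
    also have "\<dots> = (if p mod c = q mod c \<and> p div c = q div c then 1 else 0)"
      using orth pb qb by auto
    also have "\<dots> = 1\<^sub>m (k*c) $$ (p,q)"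
    proof -
      have "(p mod c = q mod c \<and> p div c = q div c) \<longleftrightarrow> p = q" by (metis div_mult_mod_eq)
      thus ?thesis using p q by simp
    qed
    finally show "(mat_adjoint Big * Big) $$ (p,q) = 1\<^sub>m (k*c) $$ (p,q)" .
  qed (use Bc in auto)
  show "Big * (mat_adjoint Big * H i) = H i" if i: "i < c" for i
  proof -
    define Y where "Y = mat_adjoint Big * H i"
    have Yc: "Y \<in> carrier_mat (k*c) k" unfolding Y_def using mult_carrier_mat[OF adj_carrier[OF Bc] Hc[OF i]] .
    have Yi: "Y $$ (p,l) = (if p = l * c + i then 1 else 0)" if p: "p < k*c" and l: "l < k" for p l
    proof -
      note pb = pbounds[OF p]
      have "Y $$ (p,l) = (\<Sum>t<R. cnj (Big$$(t,p)) * H i $$(t,l))"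
        unfolding Y_def by (rule adj_mult_index[OF Bc Hc[OF i] p l])
      also have "\<dots> = (\<Sum>t<R. cnj (H (p mod c) $$ (t, p div c)) * H i $$ (t, l))"
        by (rule sum.cong) (use p in \<open>auto simp: Bi\<close>)
      also have "\<dots> = (mat_adjoint (H (p mod c)) * H i) $$ (p div c, l)"
        by (rule adj_mult_index[symmetric]) (use pb l i Hc in auto)
      also have "\<dots> = (if p mod c = i \<and> p div c = l then 1 else 0)"
        using orth pb l i by auto
      also have "\<dots> = (if p = l * c + i then 1 else 0)"
        using divmod_eq_iff[OF i] by simp
      finally show ?thesis .
    qed
    show ?thesis
    proof (rule eq_matI)
      fix t l assume "t < dim_row (H i)" "l < dim_col (H i)"
      hence t: "t < R" and l: "l < k" using Hc[OF i] by auto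
      have lc: "l*c+i < k*c"
      proof -
        have "l*c+i < l*c + c" using i by simp
        also have "\<dots> = (l+1)*c" by simp
        also have "\<dots> \<le> k*c" using l by (intro mult_right_mono) auto
        finally show ?thesis .
      qed
      have "(Big * Y) $$ (t,l) = (\<Sum>p<k*c. Big $$ (t,p) * Y $$ (p,l))"
        using Bc Yc t l by (simp add: scalar_prod_def atLeast0LessThan)
      also have "\<dots> = (\<Sum>p<k*c. if p = l*c+i then Big $$ (t,p) else 0)"
        by (rule sum.cong) (use l in \<open>auto simp: Yi\<close>)
      also have "\<dots> = Big $$ (t, l*c+i)" using lc by simp
      also have "\<dots> = H i $$ (t,l)" by (rule Bi2[OF t l i])
      finally show "(Big * (mat_adjoint Big * H i)) $$ (t,l) = H i $$ (t,l)" unfolding Y_def .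
    qed (use Bc Hc[OF i] in auto)
  qed
qed



lemma assoc_dim[simp]: "dim_col A = dim_row B \<Longrightarrow> dim_col B = dim_row C \<Longrightarrow> (A * B) * C = A * (B * (C :: complex mat))"
proof -
  assume h: "dim_col A = dim_row B" "dim_col B = dim_row C"
  have "A \<in> carrier_mat (dim_row A) (dim_col A)" by (rule carrier_matI) simp_all
  moreover have "B \<in> carrier_mat (dim_col A) (dim_col B)" using h(1) by (intro carrier_matI) simp_all
  moreover have "C \<in> carrier_mat (dim_col B) (dim_col C)" using h(2) by (intro carrier_matI) simp_all
  ultimately show ?thesis by (rule assoc_mult_mat)
qed

lemma adj_mult_dim[simp]: "dim_col A = dim_row B \<Longrightarrow> mat_adjoint (A * B) = mat_adjoint B * mat_adjoint (A :: complex mat)"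
proof -
  assume h: "dim_col A = dim_row B"
  have "A \<in> carrier_mat (dim_row A) (dim_col A)" by (rule carrier_matI) simp_all
  moreover have "B \<in> carrier_mat (dim_col A) (dim_col B)" using h(1) by (intro carrier_matI) simp_all
  ultimately show ?thesis by (rule adj_mult)
qed

lemma smult_right_dim[simp]: "(A :: complex mat) * (c \<cdot>\<^sub>m B) = c \<cdot>\<^sub>m (A * B)"
  by (intro eq_matI) (auto simp: scalar_prod_def sum_distrib_left ac_simps)

lemma smult_left_dim[simp]: "dim_col A = dim_row B \<Longrightarrow> (c \<cdot>\<^sub>m A :: complex mat) * B = c \<cdot>\<^sub>m (A * B)"
  by (intro eq_matI) (auto simp: scalar_prod_def sum_distrib_left ac_simps)

locale tm2 = tm +
  fixes k :: nat and Uk :: "complex mat"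
  assumes m0: "0 < m" and n0: "0 < n" and Uk: "Uk \<in> carrier_mat r k"
    and iso: "mat_adjoint Uk * Uk = 1\<^sub>m k"
    and fix1: "e 0 0 * mat_adjoint (e 0 0) * Uk = Uk"
    and fix2: "Uk * mat_adjoint Uk * e 0 0 = e 0 0"
begin

lemma Uk_c[simp]: "Uk \<in> carrier_mat r k" by (rule Uk)
lemma Uk_d[simp]: "dim_row Uk = r" "dim_col Uk = k" using carrier_matD[OF Uk] by auto
lemma e_d[simp]: "dim_row (e i j) = r" "dim_col (e i j) = s" using carrier_matD[OF e_carrier[of i j]] by auto
lemma T_d[simp]: "A \<in> carrier_mat m n \<Longrightarrow> dim_row (T A) = r" "A \<in> carrier_mat m n \<Longrightarrow> dim_col (T A) = s"
  using carrier_matD[OF T_carrier[of A]] by auto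
lemma adjUk_c[simp]: "mat_adjoint Uk \<in> carrier_mat k r" using Uk by simp
lemma adje_c[simp]: "mat_adjoint (e i j) \<in> carrier_mat s r" by simp

lemma fix1': "e 0 0 * (mat_adjoint (e 0 0) * Uk) = Uk"
  using fix1 by simp

lemma fix3: "mat_adjoint (e 0 0) * (Uk * mat_adjoint Uk) = mat_adjoint (e 0 0)"
proof -
  have "mat_adjoint (Uk * mat_adjoint Uk * e 0 0) = mat_adjoint (e 0 0)" using fix2 by simp
  moreover have "mat_adjoint (Uk * mat_adjoint Uk * e 0 0) = mat_adjoint (e 0 0) * (Uk * mat_adjoint Uk)"
    by simp
  ultimately show ?thesis by simp
qed

definition Fi :: "nat \<Rightarrow> complex mat" where "Fi i = e i 0 * mat_adjoint (e 0 0) * Uk"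
definition Gj :: "nat \<Rightarrow> complex mat" where "Gj j = mat_adjoint (e 0 j) * Uk"

lemma Fi_d[simp]: "dim_row (Fi i) = r" "dim_col (Fi i) = k" unfolding Fi_def by simp_all
lemma Gj_d[simp]: "dim_row (Gj j) = s" "dim_col (Gj j) = k" unfolding Gj_def by simp_all
lemma Fi_c[simp]: "Fi i \<in> carrier_mat r k" unfolding carrier_mat_def by simp
lemma Gj_c[simp]: "Gj j \<in> carrier_mat s k" unfolding carrier_mat_def by simp

lemma adj_Fi: "mat_adjoint (Fi i) = mat_adjoint Uk * (e 0 0 * mat_adjoint (e i 0))"
  unfolding Fi_def by simp

lemma adj_Gj: "mat_adjoint (Gj j) = mat_adjoint Uk * e 0 j"
  unfolding Gj_def by simp

lemma e_decomp: assumes "i < m" "j < n" shows "e i j = Fi i * mat_adjoint (Gj j)"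
proof -
  have "Fi i * mat_adjoint (Gj j) = e i 0 * (mat_adjoint (e 0 0) * (Uk * mat_adjoint Uk)) * e 0 j"
    unfolding Fi_def adj_Gj by simp
  also have "\<dots> = e i 0 * mat_adjoint (e 0 0) * e 0 j" by (simp only: fix3)
  also have "\<dots> = e i j" using e_rel[of i 0 0 0 0 j] assms m0 n0 by simp
  finally show ?thesis by simp
qed

lemma F_orth: assumes "i < m" "i' < m"
  shows "mat_adjoint (Fi i) * Fi i' = (if i = i' then 1\<^sub>m k else 0\<^sub>m k k)"
proof -
  have "mat_adjoint (Fi i) * Fi i' = mat_adjoint Uk * (e 0 0 * mat_adjoint (e i 0) * e i' 0) * (mat_adjoint (e 0 0) * Uk)"
    unfolding adj_Fi Fi_def by simp
  also have "e 0 0 * mat_adjoint (e i 0) * e i' 0 = (if i = i' then e 0 0 else 0\<^sub>m r s)"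
    using e_rel[of 0 i i' 0 0 0] assms m0 n0 by simp
  finally show ?thesis using iso fix1' by (cases "i = i'") auto
qed

lemma G_orth: assumes "j < n" "j' < n"
  shows "mat_adjoint (Gj j) * Gj j' = (if j = j' then 1\<^sub>m k else 0\<^sub>m k k)"
proof -
  have "mat_adjoint (Gj j) * Gj j' = mat_adjoint Uk * e 0 j * mat_adjoint (e 0 j') * (e 0 0 * (mat_adjoint (e 0 0) * Uk))"
    unfolding adj_Gj Gj_def fix1' by simp
  also have "\<dots> = mat_adjoint Uk * (e 0 j * mat_adjoint (e 0 j') * e 0 0) * (mat_adjoint (e 0 0) * Uk)"
    by simp
  also have "e 0 j * mat_adjoint (e 0 j') * e 0 0 = (if j = j' then e 0 0 else 0\<^sub>m r s)"
    using e_rel[of 0 0 0 j j' 0] assms m0 n0 by simp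
  finally show ?thesis using iso fix1' by (cases "j = j'") auto
qed

lemma five': assumes A: "A \<in> carrier_mat m n" and i: "i < m" and j: "j < n"
  shows "mat_adjoint (Fi i) * T A * Gj j = A $$ (i,j) \<cdot>\<^sub>m 1\<^sub>m k"
proof -
  have "mat_adjoint (Fi i) * T A * Gj j
     = mat_adjoint Uk * (e 0 0 * mat_adjoint (e i 0) * T A * mat_adjoint (e 0 j) * e 0 0) * (mat_adjoint (e 0 0) * Uk)"
    unfolding adj_Fi Gj_def using A by (subst fix1'[symmetric]) simp
  also have "e 0 0 * mat_adjoint (e i 0) * T A * mat_adjoint (e 0 j) * e 0 0 = A $$ (i,j) \<cdot>\<^sub>m e 0 0"
    by (rule five[OF A i j m0 n0])
  also have "mat_adjoint Uk * (A $$ (i,j) \<cdot>\<^sub>m e 0 0) * (mat_adjoint (e 0 0) * Uk)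
     = A $$ (i,j) \<cdot>\<^sub>m (mat_adjoint Uk * (e 0 0 * (mat_adjoint (e 0 0) * Uk)))"
    by simp
  also have "\<dots> = A $$ (i,j) \<cdot>\<^sub>m 1\<^sub>m k" using iso fix1' by simp
  finally show ?thesis .
qed

end



lemma divmod_bounds: assumes "p < k * (c::nat)" shows "p mod c < c" "p div c < k"
proof -
  have "c > 0" using assms by (cases c) auto
  thus "p mod c < c" "p div c < k" using assms by (simp_all add: less_mult_imp_div_less mult.commute)
qed

lemma bil: assumes Y: "(Y :: complex mat) \<in> carrier_mat R r1" and X: "X \<in> carrier_mat R S"
  and Z: "Z \<in> carrier_mat S s1" and p: "p < r1" and q: "q < s1"
  shows "(mat_adjoint Y * X * Z) $$ (p,q) = (\<Sum>t<R. cnj (Y$$(t,p)) * (\<Sum>u<S. X$$(t,u) * Z$$(u,q)))"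
proof -
  have XZ: "X * Z \<in> carrier_mat R s1" using X Z by simp
  have "mat_adjoint Y * X * Z = mat_adjoint Y * (X * Z)"
    using Y X Z by (simp add: assoc_mult_mat[OF adj_carrier[OF Y] X Z])
  hence "(mat_adjoint Y * X * Z) $$ (p,q) = (\<Sum>t<R. cnj (Y$$(t,p)) * (X * Z)$$(t,q))"
    using adj_mult_index[OF Y XZ p q] by simp
  also have "\<dots> = (\<Sum>t<R. cnj (Y$$(t,p)) * (\<Sum>u<S. X$$(t,u) * Z$$(u,q)))"
    by (rule sum.cong) (use X Z q in \<open>auto simp: scalar_prod_def atLeast0LessThan\<close>)
  finally show ?thesis .
qed

lemma mult_empty: assumes "(X :: complex mat) \<in> carrier_mat a 0" "Y \<in> carrier_mat 0 b"
  shows "X * Y = 0\<^sub>m a b"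
  using assms by (intro eq_matI) (auto simp: scalar_prod_def)

context tm2
begin

definition Fbig :: "complex mat" where "Fbig = mat r (k*m) (\<lambda>(t,p). Fi (p mod m) $$ (t, p div m))"
definition Gbig :: "complex mat" where "Gbig = mat s (k*n) (\<lambda>(t,q). Gj (q mod n) $$ (t, q div n))"

lemma Fi_c': "x < m \<Longrightarrow> Fi x \<in> carrier_mat r k" by simp
lemma Gj_c': "x < n \<Longrightarrow> Gj x \<in> carrier_mat s k" by simp

lemma FB: "Fbig \<in> carrier_mat r (k*m)" "mat_adjoint Fbig * Fbig = 1\<^sub>m (k*m)"
  "\<And>i. i < m \<Longrightarrow> Fbig * (mat_adjoint Fbig * Fi i) = Fi i"
  "\<And>t l i. t < r \<Longrightarrow> l < k \<Longrightarrow> i < m \<Longrightarrow> Fbig $$ (t, l*m+i) = Fi i $$ (t,l)"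
  by (rule big_props[where c=m and H=Fi and R=r and k=k and Big=Fbig]; auto simp: F_orth Fbig_def)+

lemma GB: "Gbig \<in> carrier_mat s (k*n)" "mat_adjoint Gbig * Gbig = 1\<^sub>m (k*n)"
  "\<And>i. i < n \<Longrightarrow> Gbig * (mat_adjoint Gbig * Gj i) = Gj i"
  "\<And>t l i. t < s \<Longrightarrow> l < k \<Longrightarrow> i < n \<Longrightarrow> Gbig $$ (t, l*n+i) = Gj i $$ (t,l)"
  by (rule big_props[where c=n and H=Gj and R=s and k=k and Big=Gbig]; auto simp: G_orth Gbig_def)+

lemma Fbig_d[simp]: "dim_row Fbig = r" "dim_col Fbig = k * m" unfolding Fbig_def by simp_all
lemma Gbig_d[simp]: "dim_row Gbig = s" "dim_col Gbig = k * n" unfolding Gbig_def by simp_all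

lemma PiF: assumes A: "A \<in> carrier_mat m n" shows "Fbig * (mat_adjoint Fbig * T A) = T A"
proof (rule lin_ind[of "\<lambda>A. Fbig * (mat_adjoint Fbig * T A) = T A" m n, OF _ _ _ _ A])
  show "Fbig * (mat_adjoint Fbig * T (0\<^sub>m m n)) = T (0\<^sub>m m n)" by (simp add: T_zero)
next
  fix A B assume A: "A \<in> carrier_mat m n" and B: "B \<in> carrier_mat m n"
    and PA: "Fbig * (mat_adjoint Fbig * T A) = T A" and PB: "Fbig * (mat_adjoint Fbig * T B) = T B"
  have aF: "mat_adjoint Fbig \<in> carrier_mat (k*m) r" using FB(1) by simp
  have "mat_adjoint Fbig * (T A + T B) = mat_adjoint Fbig * T A + mat_adjoint Fbig * T B"
    by (rule mult_add_distrib_mat[OF aF T_carrier[OF A] T_carrier[OF B]])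
  moreover have "Fbig * (mat_adjoint Fbig * T A + mat_adjoint Fbig * T B)
     = Fbig * (mat_adjoint Fbig * T A) + Fbig * (mat_adjoint Fbig * T B)"
    by (rule mult_add_distrib_mat[OF FB(1) mult_carrier_mat[OF aF T_carrier[OF A]] mult_carrier_mat[OF aF T_carrier[OF B]]])
  ultimately show "Fbig * (mat_adjoint Fbig * T (A + B)) = T (A + B)"
    using PA PB T_add[OF A B] by simp
next
  fix c A assume A: "A \<in> carrier_mat m n" and PA: "Fbig * (mat_adjoint Fbig * T A) = T A"
  show "Fbig * (mat_adjoint Fbig * T (c \<cdot>\<^sub>m A)) = T (c \<cdot>\<^sub>m A)"
    using PA T_smult[OF A] by simp
next
  fix i j assume i: "i < m" and j: "j < n"
  have "Fbig * (mat_adjoint Fbig * (Fi i * mat_adjoint (Gj j))) = (Fbig * (mat_adjoint Fbig * Fi i)) * mat_adjoint (Gj j)"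
    by simp
  also have "\<dots> = Fi i * mat_adjoint (Gj j)" using FB(3)[OF i] by simp
  finally show "Fbig * (mat_adjoint Fbig * T (munit m n i j)) = T (munit m n i j)"
    using e_decomp[OF i j] unfolding e_def by simp
qed

lemma PiG: assumes A: "A \<in> carrier_mat m n" shows "T A * (Gbig * mat_adjoint Gbig) = T A"
proof (rule lin_ind[of "\<lambda>A. T A * (Gbig * mat_adjoint Gbig) = T A" m n, OF _ _ _ _ A])
  show "T (0\<^sub>m m n) * (Gbig * mat_adjoint Gbig) = T (0\<^sub>m m n)" by (simp add: T_zero)
next
  fix A B assume A: "A \<in> carrier_mat m n" and B: "B \<in> carrier_mat m n"
    and PA: "T A * (Gbig * mat_adjoint Gbig) = T A" and PB: "T B * (Gbig * mat_adjoint Gbig) = T B"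
  have GG: "Gbig * mat_adjoint Gbig \<in> carrier_mat s s" using GB(1) by simp
  have "(T A + T B) * (Gbig * mat_adjoint Gbig) = T A * (Gbig * mat_adjoint Gbig) + T B * (Gbig * mat_adjoint Gbig)"
    by (rule add_mult_distrib_mat[OF T_carrier[OF A] T_carrier[OF B] GG])
  thus "T (A + B) * (Gbig * mat_adjoint Gbig) = T (A + B)"
    using PA PB T_add[OF A B] by simp
next
  fix c A assume A: "A \<in> carrier_mat m n" and PA: "T A * (Gbig * mat_adjoint Gbig) = T A"
  show "T (c \<cdot>\<^sub>m A) * (Gbig * mat_adjoint Gbig) = T (c \<cdot>\<^sub>m A)"
    using PA T_smult[OF A] A by (simp add: smult_left_dim)
next
  fix i j assume i: "i < m" and j: "j < n"
  have "Fi i * mat_adjoint (Gj j) * (Gbig * mat_adjoint Gbig) = Fi i * mat_adjoint (Gbig * (mat_adjoint Gbig * Gj j))"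
    by simp
  also have "\<dots> = Fi i * mat_adjoint (Gj j)" using GB(3)[OF j] by simp
  finally show "T (munit m n i j) * (Gbig * mat_adjoint Gbig) = T (munit m n i j)"
    using e_decomp[OF i j] unfolding e_def by simp
qed

end



lemma mult_index_sum: assumes "(X :: complex mat) \<in> carrier_mat a b" "Y \<in> carrier_mat b c" "p < a" "q < c"
  shows "(X * Y) $$ (p,q) = (\<Sum>x<b. X $$ (p,x) * Y $$ (x,q))"
  using assms by (simp add: scalar_prod_def atLeast0LessThan)

context tm2
begin

lemma key:
  assumes U: "U \<in> carrier_mat r r" "mat_adjoint U * U = 1\<^sub>m r" "\<forall>t<r. \<forall>p<k*m. U $$ (t,p) = Fbig $$ (t,p)"
    and W: "W \<in> carrier_mat s s" "mat_adjoint W * W = 1\<^sub>m s" "\<forall>u<s. \<forall>q<k*n. W $$ (u,q) = Gbig $$ (u,q)"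
    and A: "A \<in> carrier_mat m n"
  shows "mat_adjoint U * T A * W = block_diag_rep k m n r s A"
proof (rule eq_matI)
  fix p q assume "p < dim_row (block_diag_rep k m n r s A)" "q < dim_col (block_diag_rep k m n r s A)"
  hence p: "p < r" and q: "q < s" by (auto simp: block_diag_rep_def)
  have D: "block_diag_rep k m n r s A $$ (p,q) = (if p < k * m \<and> q < k * n \<and> p div m = q div n then A $$ (p mod m, q mod n) else 0)"
    using p q by (simp add: block_diag_rep_def)
  have TA: "T A \<in> carrier_mat r s" using A by simp
  have Ud: "dim_row U = r" "dim_col U = r" using U(1) by auto
  have Wd: "dim_row W = s" "dim_col W = s" using W(1) by auto
  show "(mat_adjoint U * T A * W) $$ (p,q) = block_diag_rep k m n r s A $$ (p,q)"
  proof (cases "p < k * m")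
    case pk: True
    show ?thesis
    proof (cases "q < k * n")
      case qk: True
      define i where "i = p mod m"
      define l where "l = p div m"
      define j where "j = q mod n"
      define l' where "l' = q div n"
      have i: "i < m" and l: "l < k" using divmod_bounds[OF pk] unfolding i_def l_def by auto
      have j: "j < n" and l': "l' < k" using divmod_bounds[OF qk] unfolding j_def l'_def by auto
      have Ui: "U $$ (t,p) = Fi i $$ (t,l)" if "t < r" for t
        using U(3) that pk unfolding Fbig_def i_def l_def by simp
      have Wi: "W $$ (u,q) = Gj j $$ (u,l')" if "u < s" for u
        using W(3) that qk unfolding Gbig_def j_def l'_def by simp
      have "(mat_adjoint U * T A * W) $$ (p,q) = (\<Sum>t<r. cnj (U$$(t,p)) * (\<Sum>u<s. T A $$(t,u) * W$$(u,q)))"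
        by (rule bil[OF U(1) TA W(1) p q])
      also have "\<dots> = (\<Sum>t<r. cnj (Fi i $$(t,l)) * (\<Sum>u<s. T A $$(t,u) * Gj j $$(u,l')))"
        by (intro sum.cong refl) (simp add: Ui Wi)
      also have "\<dots> = (mat_adjoint (Fi i) * T A * Gj j) $$ (l,l')"
        by (rule bil[symmetric, OF Fi_c TA Gj_c l l'])
      also have "\<dots> = (A $$ (i,j) \<cdot>\<^sub>m 1\<^sub>m k) $$ (l,l')" using five'[OF A i j] by simp
      also have "\<dots> = (if l = l' then A $$ (i,j) else 0)" using l l' by simp
      finally show ?thesis using D pk qk unfolding i_def j_def l_def l'_def by simp
    next
      case qk: False
      have "mat_adjoint U * T A * W = mat_adjoint U * (T A * (Gbig * mat_adjoint Gbig)) * W"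
        using PiG[OF A] by simp
      also have "\<dots> = (mat_adjoint U * T A * Gbig) * (mat_adjoint Gbig * W)"
        using A Ud Wd by simp
      finally have eq: "mat_adjoint U * T A * W = (mat_adjoint U * T A * Gbig) * (mat_adjoint Gbig * W)" .
      have z: "(mat_adjoint Gbig * W) $$ (q',q) = 0" if q': "q' < k*n" for q'
      proof -
        have "(mat_adjoint Gbig * W) $$ (q',q) = (\<Sum>u<s. cnj (Gbig$$(u,q')) * W$$(u,q))"
          by (rule adj_mult_index[OF GB(1) W(1) q' q])
        also have "\<dots> = (\<Sum>u<s. cnj (W$$(u,q')) * W$$(u,q))"
          using W(3) q' by (intro sum.cong refl) simp
        also have "\<dots> = (mat_adjoint W * W) $$ (q',q)"
          using qk q' q by (intro adj_mult_index[OF W(1) W(1), symmetric]) auto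
        also have "\<dots> = 0" using W(2) qk q' q by simp
        finally show ?thesis .
      qed
      have "((mat_adjoint U * T A * Gbig) * (mat_adjoint Gbig * W)) $$ (p,q)
          = (\<Sum>q'<k*n. (mat_adjoint U * T A * Gbig) $$ (p,q') * (mat_adjoint Gbig * W) $$ (q',q))"
        by (rule mult_index_sum[OF mult_carrier_mat[OF mult_carrier_mat[OF adj_carrier[OF U(1)] TA] GB(1)]
              mult_carrier_mat[OF adj_carrier[OF GB(1)] W(1)] p q])
      also have "\<dots> = 0" by (rule sum.neutral) (simp add: z)
      finally show ?thesis using eq D qk by simp
    qed
  next
    case pk: False
    have "mat_adjoint U * T A * W = mat_adjoint U * (Fbig * (mat_adjoint Fbig * T A)) * W"
      using PiF[OF A] by simp
    also have "\<dots> = (mat_adjoint U * Fbig) * (mat_adjoint Fbig * T A * W)"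
      using A Ud Wd by simp
    finally have eq: "mat_adjoint U * T A * W = (mat_adjoint U * Fbig) * (mat_adjoint Fbig * T A * W)" .
    have z: "(mat_adjoint U * Fbig) $$ (p,p') = 0" if p': "p' < k*m" for p'
    proof -
      have "(mat_adjoint U * Fbig) $$ (p,p') = (\<Sum>t<r. cnj (U$$(t,p)) * Fbig$$(t,p'))"
        by (rule adj_mult_index[OF U(1) FB(1) p p'])
      also have "\<dots> = (\<Sum>t<r. cnj (U$$(t,p)) * U$$(t,p'))"
        using U(3) p' by (intro sum.cong refl) simp
      also have "\<dots> = (mat_adjoint U * U) $$ (p,p')"
        using pk p' p by (intro adj_mult_index[OF U(1) U(1), symmetric]) auto
      also have "\<dots> = 0" using U(2) pk p' p by simp
      finally show ?thesis .
    qed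
    have "((mat_adjoint U * Fbig) * (mat_adjoint Fbig * T A * W)) $$ (p,q)
        = (\<Sum>p'<k*m. (mat_adjoint U * Fbig) $$ (p,p') * (mat_adjoint Fbig * T A * W) $$ (p',q))"
      by (rule mult_index_sum[OF mult_carrier_mat[OF adj_carrier[OF U(1)] FB(1)]
              mult_carrier_mat[OF mult_carrier_mat[OF adj_carrier[OF FB(1)] TA] W(1)] p q])
    also have "\<dots> = 0" by (rule sum.neutral) (simp add: z)
    finally show ?thesis using eq D pk by simp
  qed
qed (use U(1) W(1) A in \<open>auto simp: block_diag_rep_def\<close>)

lemma main_tm2: "\<exists>U V. unitary_mat r U \<and> unitary_mat s V \<and> (\<forall>A\<in>carrier_mat m n. T A = U * block_diag_rep k m n r s A * V)"
proof -
  obtain U where U: "U \<in> carrier_mat r r" "mat_adjoint U * U = 1\<^sub>m r" "U * mat_adjoint U = 1\<^sub>m r"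
    "\<forall>t<r. \<forall>p<k*m. U $$ (t,p) = Fbig $$ (t,p)"
    using complete_unitary[OF FB(1) FB(2)] by blast
  obtain W where W: "W \<in> carrier_mat s s" "mat_adjoint W * W = 1\<^sub>m s" "W * mat_adjoint W = 1\<^sub>m s"
    "\<forall>t<s. \<forall>p<k*n. W $$ (t,p) = Gbig $$ (t,p)"
    using complete_unitary[OF GB(1) GB(2)] by blast
  have Ud: "dim_row U = r" "dim_col U = r" using U(1) by auto
  have Wd: "dim_row W = s" "dim_col W = s" using W(1) by auto
  have rep: "T A = U * block_diag_rep k m n r s A * mat_adjoint W" if A: "A \<in> carrier_mat m n" for A
  proof -
    have "U * block_diag_rep k m n r s A * mat_adjoint W = U * (mat_adjoint U * T A * W) * mat_adjoint W"
      using key[OF U(1,2,4) W(1,2,4) A] by simp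
    also have "\<dots> = (U * mat_adjoint U) * T A * (W * mat_adjoint W)" using Ud Wd A by simp
    also have "\<dots> = T A" using U(3) W(3) A by simp
    finally show ?thesis by simp
  qed
  have uU: "unitary_mat r U" unfolding unitary_mat_def using U by simp
  have uW: "unitary_mat s (mat_adjoint W)" unfolding unitary_mat_def using W by simp
  show ?thesis using rep uU uW by blast
qed

lemma inj_tm2: assumes k0: "0 < k" shows "inj_on T (carrier_mat m n)"
proof (rule inj_onI)
  fix A B assume A: "A \<in> carrier_mat m n" and B: "B \<in> carrier_mat m n" and eq: "T A = T B"
  show "A = B"
  proof (rule eq_matI)
    fix i j assume "i < dim_row B" "j < dim_col B"
    hence i: "i < m" and j: "j < n" using B by auto
    have "A $$ (i,j) \<cdot>\<^sub>m 1\<^sub>m k = B $$ (i,j) \<cdot>\<^sub>m (1\<^sub>m k :: complex mat)"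
      using five'[OF A i j] five'[OF B i j] eq by simp
    hence "(A $$ (i,j) \<cdot>\<^sub>m 1\<^sub>m k) $$ (0,0) = (B $$ (i,j) \<cdot>\<^sub>m (1\<^sub>m k :: complex mat)) $$ (0,0)" by simp
    thus "A $$ (i,j) = B $$ (i,j)" using k0 by simp
  qed (use A B in auto)
qed

lemma k_pos: assumes "\<exists>A\<in>carrier_mat m n. T A \<noteq> 0\<^sub>m r s" shows "0 < k"
proof (rule ccontr)
  assume "\<not> 0 < k"
  hence k: "k = 0" by simp
  obtain A where A: "A \<in> carrier_mat m n" "T A \<noteq> 0\<^sub>m r s" using assms by blast
  have F0: "Fbig \<in> carrier_mat r 0" using FB(1) k by simp
  have Y0: "mat_adjoint Fbig * T A \<in> carrier_mat 0 s" using mult_carrier_mat[OF adj_carrier[OF F0] T_carrier[OF A(1)]] .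
  have "T A = Fbig * (mat_adjoint Fbig * T A)" using PiF[OF A(1)] by simp
  also have "\<dots> = 0\<^sub>m r s" by (rule mult_empty[OF F0 Y0])
  finally show False using A by simp
qed

lemma bounds: "k * m \<le> r" "k * n \<le> s"
  using isometry_bound[OF FB(1) FB(2)] isometry_bound[OF GB(1) GB(2)] by auto

end


theorem lemma3p5:
  fixes m n r s :: nat and T :: "complex mat \<Rightarrow> complex mat"
  assumes "triple_morphism m n r s T"
    and "\<exists>A \<in> carrier_mat m n. T A \<noteq> 0\<^sub>m r s"
  shows "inj_on T (carrier_mat m n) \<and>
    (\<exists>k U V. k \<ge> 1 \<and> k * m \<le> r \<and> k * n \<le> s \<and> unitary_mat r U \<and> unitary_mat s V \<and>
       (\<forall>A \<in> carrier_mat m n. T A = U * block_diag_rep k m n r s A * V))"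
proof -
  interpret tm m n r s T by unfold_locales (rule assms(1))
  obtain A0 where A0: "A0 \<in> carrier_mat m n" "T A0 \<noteq> 0\<^sub>m r s" using assms(2) by blast
  have m0: "0 < m"
  proof (rule ccontr)
    assume "\<not> 0 < m"
    hence "A0 = 0\<^sub>m m n" using A0(1) by (intro eq_matI) auto
    thus False using A0(2) T_zero by simp
  qed
  have n0: "0 < n"
  proof (rule ccontr)
    assume "\<not> 0 < n"
    hence "A0 = 0\<^sub>m m n" using A0(1) by (intro eq_matI) auto
    thus False using A0(2) T_zero by simp
  qed
  have pa: "e 0 0 * mat_adjoint (e 0 0) * e 0 0 = e 0 0" using e_rel[of 0 0 0 0 0 0] m0 n0 by simp
  obtain k Uk where kU: "Uk \<in> carrier_mat r k" "mat_adjoint Uk * Uk = 1\<^sub>m k"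
     "e 0 0 * mat_adjoint (e 0 0) * Uk = Uk" "Uk * mat_adjoint Uk * e 0 0 = e 0 0"
    using range_basis[OF e_carrier pa] by blast
  have "tm2 m n r s T k Uk"
    unfolding tm2_def tm2_axioms_def using assms(1) m0 n0 kU by (simp add: tm_def)
  then interpret t2: tm2 m n r s T k Uk .
  have k0: "0 < k" by (rule t2.k_pos[OF assms(2)])
  show ?thesis using t2.inj_tm2[OF k0] t2.main_tm2 t2.bounds k0 by (metis One_nat_def Suc_leI)
qed


end
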